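(* There is an absolute constant $C>0$ such that the following holds. Let $p$ be a prime and $n:=p^3$. Let $s_0,\dots,s_{n-1}\in[0,1)$ be such that $Q_{0,3}(x)=\sum_{j=0}^{n-1}e^{2\pi\imath s_j}x^j$. Then for every $t\in\mathbb{R}$, $$B(s_0,\,s_1+t,\,s_2+2t,\dots,s_{n-1}+(n-1)t)\ \le\ C\,n^{2/3}\log n.$$
   Context: Fix a prime $p$ and a primitive $p$-th root of unity $\xi$. Let $D$ be the $p\times p$ matrix $D_{j,l}=\xi^{jl}$, $j,l\in\{0,\dots,p-1\}$. Define polynomials $Q_{0,r},\dots,Q_{p-1,r}\in\mathbb{C}[x]$ recursively: $Q_{j,0}:=1$ for all $j$, and for $r\ge0$, $$(Q_{0,r+1},\dots,Q_{p-1,r+1})^T:=D\cdot\big(Q_{0,r},\,x^{p^r}Q_{1,r},\dots,x^{(p-1)p^r}Q_{p-1,r}\big)^T.$$ $Q_{0,3}$ has degree $p^3-1$ and all coefficients of absolute value $1$. For $r\in\mathbb{R}$, $\{r\}:=r-\lfloor r\rfloor$; the bias of $r_1,\dots,r_N$ is $B(r_1,\dots,r_N):=\sup_{0\le a\le b\le1}\big|\,|\{i:\{r_i\}\in[a,b]\}|-N(b-a)\big|$. *)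

theory Defs
  imports "HOL-Analysis.Analysis" "HOL-Computational_Algebra.Polynomial"
begin

fun Qpoly :: "nat \<Rightarrow> complex \<Rightarrow> nat \<Rightarrow> nat \<Rightarrow> complex poly" where
  "Qpoly p \<xi> j 0 = 1"
| "Qpoly p \<xi> j (Suc r) =
     (\<Sum>l<p. smult (\<xi> ^ (j * l)) (monom 1 (l * p ^ r) * Qpoly p \<xi> l r))"

definition primitive_root_of_unity :: "nat \<Rightarrow> complex \<Rightarrow> bool" where
  "primitive_root_of_unity p \<xi> \<longleftrightarrow> \<xi> ^ p = 1 \<and> (\<forall>k. 0 < k \<and> k < p \<longrightarrow> \<xi> ^ k \<noteq> 1)"

definition frac_part :: "real \<Rightarrow> real" where
  "frac_part r = r - of_int \<lfloor>r\<rfloor>"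

definition bias :: "nat \<Rightarrow> (nat \<Rightarrow> real) \<Rightarrow> real" where
  "bias N r = (SUP ab \<in> {(a, b). 0 \<le> a \<and> a \<le> b \<and> b \<le> (1::real)}.
      \<bar>real (card {i. i < N \<and> frac_part (r i) \<in> {fst ab..snd ab}}) - real N * (snd ab - fst ab)\<bar>)"

end

theory Submission
  imports Defs
begin


definition ee :: "real \<Rightarrow> complex" where "ee x = cis (2 * pi * x)"

lemma ee_add: "ee (a + b) = ee a * ee b"
  by (simp add: ee_def cis_mult distrib_left)

lemma ee_norm [simp]: "norm (ee x) = 1"
  by (simp add: ee_def)

lemma ee_int: "x \<in> \<int> \<Longrightarrow> ee x = 1"
  by (simp add: ee_def)

lemma ee_of_int [simp]: "ee (of_int m) = 1"
  by (simp add: ee_int)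

lemma ee_of_nat [simp]: "ee (of_nat m) = 1"
  by (simp add: ee_int)

lemma ee_zero [simp]: "ee 0 = 1" by (simp add: ee_def)

lemma ee_pow: "ee x ^ n = ee (real n * x)"
proof -
  have "ee x ^ n = cis (real n * (2*pi*x))" unfolding ee_def by (rule Complex.DeMoivre)
  then show ?thesis by (simp add: ee_def algebra_simps)
qed

lemma ee_minus: "ee (- x) = cnj (ee x)"
  by (simp add: ee_def cis_cnj)

lemma ee_diff: "ee (a - b) = ee a * cnj (ee b)"
  using ee_add[of a "-b"] by (simp add: ee_minus)

lemma ee_periodic: "m \<in> \<int> \<Longrightarrow> ee (x + m) = ee x"
  by (simp add: ee_add ee_int)

lemma sin_lower: assumes "0 \<le> x" "x \<le> 1/2" shows "x \<le> sin (pi * x)"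
proof -
  have b: "\<bar>sin (pi*x) - (\<Sum>m<3. sin_coeff m * (pi*x) ^ m)\<bar> \<le> inverse (fact 3) * \<bar>pi*x\<bar> ^ 3"
    by (rule Maclaurin_sin_bound)
  have s: "(\<Sum>m<3. sin_coeff m * (pi*x) ^ m) = pi * x"
    by (simp add: numeral_3_eq_3 sin_coeff_def eval_nat_numeral)
  have f3: "inverse (fact 3) = (1/6::real)" by (simp add: fact_numeral)
  have "\<bar>sin (pi*x) - pi*x\<bar> \<le> (pi*x)^3/6" using b unfolding s f3 using assms by simp
  then have "pi*x - (pi*x)^3/6 \<le> sin (pi*x)" by (simp only: abs_le_iff) linarith
  moreover have "x \<le> pi*x - (pi*x)^3/6"
  proof -
    have p3: "pi \<ge> 3" using pi_gt3 by simp
    have p4: "pi \<le> 4" using pi_less_4 by simp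
    have a1: "pi^2 \<le> 4^2" using p4 by (intro power_mono) auto
    have a2: "x^2 \<le> (1/2)^2" using assms by (intro power_mono) auto
    have "pi^2 * x^2 \<le> 4^2 * (1/2)^2" using a1 a2 by (intro mult_mono) auto
    moreover have "(4::real)^2 * (1/2)^2 = 16 * (1/4)" by (simp add: power2_eq_square)
    ultimately have "pi^2 * x^2 \<le> 16 * (1/4)" by linarith
    then have "pi^2*x^2 \<le> 4" by simp
    then have "(pi*x)^3/6 = pi*x*(pi^2*x^2)/6" by (simp add: power_mult_distrib eval_nat_numeral)
    moreover have "pi*x*(pi^2*x^2)/6 \<le> pi*x*4/6"
      using \<open>pi^2*x^2 \<le> 4\<close> assms by (intro divide_right_mono mult_left_mono) auto
    moreover have "x \<le> pi*x - pi*x*4/6"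
    proof -
      have "3*x \<le> pi*x" using mult_right_mono[OF p3 assms(1)] by simp
      then show ?thesis by simp
    qed
    ultimately show ?thesis by linarith
  qed
  ultimately show ?thesis by linarith
qed

lemma abs_sin_lower: assumes "\<bar>x\<bar> \<le> 1/2" shows "\<bar>x\<bar> \<le> \<bar>sin (pi * x)\<bar>"
proof (cases "x \<ge> 0")
  case True then show ?thesis using sin_lower[of x] assms by auto
next
  case False then show ?thesis using sin_lower[of "-x"] assms by auto
qed

lemma norm_1_minus_ee: "norm (1 - ee x) = 2 * \<bar>sin (pi * x)\<bar>"
proof -
  have "(norm (1 - ee x))^2 = (1 - cos (2*pi*x))^2 + (sin (2*pi*x))^2"
    by (simp add: ee_def cmod_power2 cis.ctr)
  also have "\<dots> = 2 - 2 * cos (2*pi*x)"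
    by (simp add: power2_eq_square algebra_simps)
  also have "cos (2*pi*x) = 1 - 2 * (sin (pi*x))^2"
    using cos_double_sin[of "pi*x"] by (simp add: mult.assoc)
  finally have "(norm (1 - ee x))^2 = (2 * \<bar>sin (pi * x)\<bar>)^2"
    by (simp add: power_mult_distrib)
  then show ?thesis using power2_eq_iff_nonneg[of "norm (1 - ee x)" "2 * \<bar>sin (pi * x)\<bar>"] by simp
qed



lemma geo_bound:
  fixes z :: complex
  assumes "z \<noteq> 1" "norm z = 1"
  shows "norm (\<Sum>r<R. z ^ r) \<le> 2 / norm (1 - z)"
proof -
  have "(\<Sum>r<R. z ^ r) = (1 - z ^ R) / (1 - z)" using assms(1) by (simp add: sum_gp_strict)
  then have "norm (\<Sum>r<R. z ^ r) = norm (1 - z ^ R) / norm (1 - z)" by (simp add: norm_divide)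
  also have "norm (1 - z ^ R) \<le> 2"
    using norm_triangle_ineq4[of 1 "z^R"] assms(2) by (simp add: norm_power)
  finally show ?thesis by (simp add: divide_right_mono)
qed

lemma geo_zero:
  fixes z :: complex
  assumes "z \<noteq> 1" "z ^ L = 1"
  shows "(\<Sum>r<L. z ^ r) = 0"
  using assms by (simp add: sum_gp_strict)

lemma ee_ne_1: assumes "0 < \<bar>t\<bar>" "\<bar>t\<bar> \<le> 1/2" shows "ee t \<noteq> 1"
proof
  assume "ee t = 1"
  then have "norm (1 - ee t) = 0" by simp
  then show False using norm_1_minus_ee[of t] abs_sin_lower[of t] assms by simp
qed

lemma ee_geo_bound:
  assumes "0 < \<bar>t\<bar>" "\<bar>t\<bar> \<le> 1/2"
  shows "norm (\<Sum>r<R. ee t ^ r) \<le> 1 / \<bar>t\<bar>"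
proof -
  have "norm (\<Sum>r<R. ee t ^ r) \<le> 2 / norm (1 - ee t)"
    by (rule geo_bound) (use ee_ne_1[OF assms] in auto)
  also have "\<dots> = 1 / \<bar>sin (pi * t)\<bar>" by (simp add: norm_1_minus_ee)
  also have "\<dots> \<le> 1 / \<bar>t\<bar>"
    using abs_sin_lower[OF assms(2)] assms by (intro divide_left_mono) auto
  finally show ?thesis .
qed

lemma char_sum:
  fixes k :: int
  assumes "\<bar>k\<bar> \<le> H" "2 * H < L"
  shows "(\<Sum>r<L. ee (real_of_int k / real L) ^ r) = (if k = 0 then of_nat L else 0)"
proof (cases "k = 0")
  case True then show ?thesis by simp
next
  case False
  have L0: "L > 0" using assms by linarith
  have "2 * \<bar>k\<bar> \<le> int L" using assms by linarith
  then have "real_of_int (2 * \<bar>k\<bar>) \<le> real_of_int (int L)" by (simp only: of_int_le_iff)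
  then have k1: "2 * \<bar>real_of_int k\<bar> \<le> real L" by simp
  have "\<bar>real_of_int k / real L\<bar> = \<bar>real_of_int k\<bar> / real L" using L0 by simp
  also have "\<dots> \<le> 1/2" using k1 L0 by (simp add: pos_divide_le_eq)
  finally have "\<bar>real_of_int k / real L\<bar> \<le> 1/2" .
  moreover have "0 < \<bar>real_of_int k / real L\<bar>" using False L0 by simp
  ultimately have ne: "ee (real_of_int k / real L) \<noteq> 1" by (rule ee_ne_1[rotated])
  have "ee (real_of_int k / real L) ^ L = 1" using L0 by (simp add: ee_pow)
  with ne show ?thesis using False geo_zero by simp
qed

definition fej :: "nat \<Rightarrow> real \<Rightarrow> real" where
  "fej H x = (norm (\<Sum>j<Suc H. ee (real j * x)))^2 / real (Suc H)"

lemma fej_nonneg: "0 \<le> fej H x" by (simp add: fej_def)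

lemma fej_bound:
  assumes "sin (pi * x) \<noteq> 0"
  shows "fej H x \<le> 1 / (real (Suc H) * (sin (pi * x))^2)"
proof -
  have ne: "ee x \<noteq> 1"
  proof
    assume "ee x = 1" then have "norm (1 - ee x) = 0" by simp
    then show False using norm_1_minus_ee[of x] assms by simp
  qed
  have "norm (\<Sum>j<Suc H. ee (real j * x)) = norm (\<Sum>j<Suc H. ee x ^ j)" by (simp add: ee_pow)
  also have "\<dots> \<le> 2 / norm (1 - ee x)" by (rule geo_bound) (use ne in auto)
  also have "\<dots> = 1 / \<bar>sin (pi * x)\<bar>" by (simp add: norm_1_minus_ee)
  finally have "(norm (\<Sum>j<Suc H. ee (real j * x)))^2 \<le> (1 / \<bar>sin (pi * x)\<bar>)^2"
    by (intro power_mono) auto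
  then have "fej H x \<le> (1 / \<bar>sin (pi * x)\<bar>)^2 / real (Suc H)"
    unfolding fej_def by (rule divide_right_mono) auto
  also have "(1 / \<bar>sin (pi * x)\<bar>)^2 / real (Suc H) = 1 / (real (Suc H) * (sin (pi * x))^2)"
    by (simp add: power_one_over)
  finally show ?thesis .
qed

lemma fej_expand:
  "complex_of_real (fej H x) =
     (\<Sum>j<Suc H. \<Sum>j'<Suc H. ee ((real j - real j') * x)) / of_nat (Suc H)"
proof -
  let ?s = "\<Sum>j<Suc H. ee (real j * x)"
  have "complex_of_real ((norm ?s)^2) = ?s * cnj ?s" by (rule complex_norm_square)
  also have "\<dots> = (\<Sum>j<Suc H. \<Sum>j'<Suc H. ee (real j * x) * cnj (ee (real j' * x)))"
    unfolding cnj_sum sum_product ..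
  also have "\<dots> = (\<Sum>j<Suc H. \<Sum>j'<Suc H. ee ((real j - real j') * x))"
    by (simp add: ee_diff[symmetric] left_diff_distrib)
  finally show ?thesis unfolding fej_def by simp
qed

lemma fej_periodic: assumes "m \<in> \<int>" shows "fej H (x + m) = fej H x"
proof -
  have "ee (real j * (x + m)) = ee (real j * x)" for j
  proof -
    have "real j * m \<in> \<int>" using assms by simp
    then show ?thesis by (simp add: distrib_left ee_periodic)
  qed
  then show ?thesis unfolding fej_def by simp
qed

lemma fej_full:
  assumes "2 * H < L"
  shows "(\<Sum>r<L. fej H (x - real r / real L)) = real L"
proof -
  have "complex_of_real (\<Sum>r<L. fej H (x - real r / real L))
     = (\<Sum>r<L. \<Sum>j<Suc H. \<Sum>j'<Suc H. ee ((real j - real j') * (x - real r / real L))) / of_nat (Suc H)"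
    by (simp add: fej_expand sum_divide_distrib)
  also have "(\<Sum>r<L. \<Sum>j<Suc H. \<Sum>j'<Suc H. ee ((real j - real j') * (x - real r / real L)))
     = (\<Sum>j<Suc H. \<Sum>j'<Suc H. ee ((real j - real j') * x) *
          (\<Sum>r<L. ee (real_of_int (int j' - int j) / real L) ^ r))"
  proof -
    have e: "ee ((real j - real j') * (x - real r / real L)) =
          ee ((real j - real j') * x) * ee (real_of_int (int j' - int j) / real L) ^ r" for j j' r
    proof -
      have "(real j - real j') * (x - real r / real L) = (real j - real j') * x + real r * (real_of_int (int j' - int j) / real L)"
        by (simp add: algebra_simps diff_divide_distrib)
      then show ?thesis by (simp only: ee_add ee_pow)
    qed
    show ?thesis unfolding e by (subst sum.swap) (simp add: sum.swap[of _ "{..<L}"] sum_distrib_left)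
  qed
  also have "\<dots> = (\<Sum>j<Suc H. \<Sum>j'<Suc H. if j' = j then of_nat L else 0)"
  proof (intro sum.cong refl)
    fix j j' assume "j \<in> {..<Suc H}" "j' \<in> {..<Suc H}"
    then have "\<bar>int j' - int j\<bar> \<le> int H" by auto
    then have "(\<Sum>r<L. ee (real_of_int (int j' - int j) / real L) ^ r)
        = (if int j' - int j = 0 then of_nat L else 0)"
      using assms by (intro char_sum[of _ H]) auto
    then show "ee ((real j - real j') * x) * (\<Sum>r<L. ee (real_of_int (int j' - int j) / real L) ^ r)
        = (if j' = j then of_nat L else 0)" by auto
  qed
  also have "\<dots> = of_nat (Suc H) * of_nat L" by (simp add: algebra_simps)
  finally have "complex_of_real (\<Sum>r<L. fej H (x - real r / real L)) = of_nat (Suc H) * of_nat L / of_nat (Suc H)"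
    by simp
  also have "\<dots> = complex_of_real (real L)"
    by (metis nonzero_mult_div_cancel_left of_nat_eq_0_iff of_real_of_nat_eq nat.distinct(1))
  finally have "complex_of_real (\<Sum>r<L. fej H (x - real r / real L)) = complex_of_real (real L)" .
  then show ?thesis using of_real_eq_iff by blast
qed



definition tt :: "nat \<Rightarrow> real \<Rightarrow> nat \<Rightarrow> real" where
  "tt L \<delta> k = 1 / (real L * (\<delta> + real k / real L)^2)"

lemma tele:
  assumes "\<delta> > 0" "real L * \<delta> \<ge> 1"
  shows "(\<Sum>k<K. tt L \<delta> k) \<le> 2/\<delta> - 2/(\<delta> + real K / real L)"
proof (induction K)
  case 0 then show ?case by simp
next
  case (Suc K)
  have L0: "real L > 0" using assms by (cases "L = 0") auto
  define A where "A = \<delta> + real K / real L"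
  have A1: "A \<ge> 1 / real L" using assms L0 unfolding A_def
    by (simp add: field_simps)
  have A0: "A > 0" using A1 L0 by (smt (verit) divide_pos_pos)
  have B: "\<delta> + real (Suc K) / real L = A + 1 / real L" unfolding A_def by (simp add: add_divide_distrib)
  have step: "tt L \<delta> K \<le> 2/A - 2/(A + 1/real L)"
  proof -
    define Bb where "Bb = A + 1/real L"
    have "1/real L > 0" using L0 by simp
    then have B0: "Bb > 0" unfolding Bb_def using A0 by linarith
    have "2/A - 2/Bb = 2*(Bb - A)/(A*Bb)" using A0 B0 by (simp add: field_simps)
    also have "Bb - A = 1/real L" unfolding Bb_def by simp
    also have "2*(1/real L)/(A*Bb) = 2 / (real L * A * Bb)" by simp
    finally have "2/A - 2/(A + 1/real L) = 2 / (real L * A * (A + 1 / real L))" unfolding Bb_def .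
    also have "\<dots> \<ge> 2 / (real L * A * (2*A))"
      using A0 L0 A1 B0 unfolding Bb_def by (intro divide_left_mono mult_left_mono mult_pos_pos) auto
    finally have "2/A - 2/(A + 1/real L) \<ge> 1 / (real L * A^2)"
      using A0 L0 by (simp add: power2_eq_square field_simps)
    then show ?thesis unfolding tt_def A_def .
  qed
  have "(\<Sum>k<Suc K. tt L \<delta> k) = (\<Sum>k<K. tt L \<delta> k) + tt L \<delta> K" by simp
  also have "\<dots> \<le> (2/\<delta> - 2/A) + (2/A - 2/(A + 1/real L))"
    using Suc.IH step unfolding A_def by linarith
  also have "\<dots> = 2/\<delta> - 2/(\<delta> + real (Suc K) / real L)" using B by simp
  finally show ?case .
qed

lemma tele_set:
  assumes "\<delta> > 0" "real L * \<delta> \<ge> 1" "finite S"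
  shows "(\<Sum>k\<in>S. tt L \<delta> k) \<le> 2/\<delta>"
proof -
  have L0: "real L > 0" using assms by (cases "L = 0") auto
  obtain K where "S \<subseteq> {..<K}" using assms(3) finite_nat_iff_bounded by auto
  then have "(\<Sum>k\<in>S. tt L \<delta> k) \<le> (\<Sum>k<K. tt L \<delta> k)"
    by (intro sum_mono2) (auto simp: tt_def)
  also have "\<dots> \<le> 2/\<delta> - 2/(\<delta> + real K / real L)" by (rule tele[OF assms(1,2)])
  also have "\<dots> \<le> 2/\<delta>" using assms L0 by simp
  finally show ?thesis .
qed

lemma sin_min: assumes "0 < y" "y < 1" shows "min y (1 - y) \<le> sin (pi * y)"
proof (cases "y \<le> 1/2")
  case True then show ?thesis using sin_lower[of y] assms by auto
next
  case False
  have "sin (pi * y) = sin (pi * (1 - y))" by (simp add: algebra_simps sin_diff)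
  then show ?thesis using sin_lower[of "1-y"] assms False by auto
qed

lemma fej_tail_point:
  assumes "0 < y" "y < 1" "d1 > 0" "d2 > 0" "y \<ge> d1" "1 - y \<ge> d2"
  shows "fej H (- y) \<le> (1/d1^2 + 1/d2^2) / real (Suc H)"
proof -
  have m0: "0 < min y (1 - y)" using assms by auto
  have s: "min y (1 - y) \<le> sin (pi * y)" by (rule sin_min) (use assms in auto)
  have sne: "sin (pi * (-y)) \<noteq> 0" using s m0 by auto
  have "fej H (-y) \<le> 1 / (real (Suc H) * (sin (pi * (-y)))^2)" by (rule fej_bound[OF sne])
  also have "(sin (pi * (-y)))^2 = (sin (pi * y))^2" by simp
  also have "1 / (real (Suc H) * (sin (pi * y))^2) \<le> 1 / (real (Suc H) * (min y (1-y))^2)"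
    using m0 s by (intro divide_left_mono mult_left_mono mult_pos_pos power_mono) auto
  also have "1 / (min y (1-y))^2 \<le> 1/d1^2 + 1/d2^2"
  proof (cases "y \<le> 1 - y")
    case True
    then have "1/(min y (1-y))^2 = 1/y^2" by simp
    also have "\<dots> \<le> 1/d1^2" using assms by (intro divide_left_mono power_mono mult_pos_pos) auto
    finally show ?thesis by (smt (verit) zero_le_divide_1_iff zero_le_power2)
  next
    case False
    then have "1/(min y (1-y))^2 = 1/(1-y)^2" by simp
    also have "\<dots> \<le> 1/d2^2" using assms by (intro divide_left_mono power_mono mult_pos_pos) auto
    finally show ?thesis by (smt (verit) zero_le_divide_1_iff zero_le_power2)
  qed
  then have "1 / (min y (1-y))^2 / real (Suc H) \<le> (1/d1^2 + 1/d2^2) / real (Suc H)"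
    by (rule divide_right_mono) simp
  then have "1 / (real (Suc H) * (min y (1-y))^2) \<le> (1/d1^2 + 1/d2^2) / real (Suc H)"
    by (simp add: mult.commute)
  finally show ?thesis .
qed

lemma fej_tail:
  assumes "\<delta> > 0" "real L * \<delta> \<ge> 1" "a \<le> x" "x \<le> b" "R \<le> L"
    "real R / real L \<ge> b - a + 2 * \<delta>"
  shows "(\<Sum>r\<in>{R..<L}. fej H (x - (a - \<delta>) - real r / real L)) / real L \<le> 4 / (real (Suc H) * \<delta>)"
proof -
  have L0: "real L > 0" using assms by (cases "L = 0") auto
  have pt: "fej H (x - (a - \<delta>) - real r / real L) / real L
       \<le> (tt L \<delta> (r - R) + tt L \<delta> (L - 1 - r)) / real (Suc H)" if r: "r \<in> {R..<L}" for r
  proof -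
    define y where "y = (a - \<delta>) + real r / real L - x"
    have ye: "x - (a - \<delta>) - real r / real L = - y" unfolding y_def by simp
    have d1: "y \<ge> \<delta> + real (r - R) / real L"
    proof -
      have "real (r - R) / real L = real r / real L - real R / real L"
        using r by (simp add: of_nat_diff diff_divide_distrib)
      then show ?thesis unfolding y_def using assms by linarith
    qed
    have d2: "1 - y \<ge> \<delta> + real (L - 1 - r) / real L"
    proof -
      have "real (L - 1 - r) / real L \<le> real (L - r) / real L"
        using L0 by (intro divide_right_mono) auto
      also have "real (L - r) / real L = 1 - real r / real L"
        using r L0 by (simp add: of_nat_diff diff_divide_distrib)
      finally show ?thesis unfolding y_def using assms by linarith
    qed
    have p1: "\<delta> + real (r - R) / real L > 0" "\<delta> + real (L - 1 - r) / real L > 0"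
      using assms L0 by (auto intro!: add_pos_nonneg)
    have "fej H (-y) \<le> (1/(\<delta> + real (r - R) / real L)^2 + 1/(\<delta> + real (L - 1 - r) / real L)^2) / real (Suc H)"
      by (rule fej_tail_point) (use d1 d2 p1 in auto)
    then show ?thesis unfolding ye tt_def using L0
      by (simp add: divide_right_mono field_simps)
  qed
  have "(\<Sum>r\<in>{R..<L}. fej H (x - (a - \<delta>) - real r / real L)) / real L
      = (\<Sum>r\<in>{R..<L}. fej H (x - (a - \<delta>) - real r / real L) / real L)"
    by (simp add: sum_divide_distrib)
  also have "\<dots> \<le> (\<Sum>r\<in>{R..<L}. (tt L \<delta> (r - R) + tt L \<delta> (L - 1 - r)) / real (Suc H))"
    by (intro sum_mono pt)
  also have "\<dots> = ((\<Sum>r\<in>{R..<L}. tt L \<delta> (r - R)) + (\<Sum>r\<in>{R..<L}. tt L \<delta> (L - 1 - r))) / real (Suc H)"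
    by (simp only: sum_divide_distrib[symmetric] sum.distrib)
  also have "\<dots> \<le> (2/\<delta> + 2/\<delta>) / real (Suc H)"
  proof -
    have "(\<Sum>r\<in>{R..<L}. tt L \<delta> (r - R)) = (\<Sum>k\<in>(\<lambda>r. r - R) ` {R..<L}. tt L \<delta> k)"
      by (subst sum.reindex) (auto simp: inj_on_def)
    also have "\<dots> \<le> 2/\<delta>" by (rule tele_set) (use assms in auto)
    finally have 1: "(\<Sum>r\<in>{R..<L}. tt L \<delta> (r - R)) \<le> 2/\<delta>" .
    have "(\<Sum>r\<in>{R..<L}. tt L \<delta> (L - 1 - r)) = (\<Sum>k\<in>(\<lambda>r. L - 1 - r) ` {R..<L}. tt L \<delta> k)"
      by (subst sum.reindex) (auto simp: inj_on_def)
    also have "\<dots> \<le> 2/\<delta>" by (rule tele_set) (use assms in auto)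
    finally have 2: "(\<Sum>r\<in>{R..<L}. tt L \<delta> (L - 1 - r)) \<le> 2/\<delta>" .
    show ?thesis using 1 2 by (intro divide_right_mono) auto
  qed
  also have "(2/\<delta> + 2/\<delta>) / real (Suc H) = 4 / (real (Suc H) * \<delta>)" by simp
  finally show ?thesis .
qed



lemma pair_bound:
  fixes f :: "nat \<Rightarrow> real"
  assumes f0: "\<And>d. 0 \<le> f d"
  shows "(\<Sum>j<Suc H. \<Sum>j'<Suc H. if j' = j then 0 else f (if j \<le> j' then j' - j else j - j'))
         \<le> 2 * real (Suc H) * (\<Sum>d\<in>{1..H}. f d)"
proof -
  have per: "(\<Sum>j'<Suc H. if j' = j then 0 else f (if j \<le> j' then j' - j else j - j'))
          \<le> 2 * (\<Sum>d\<in>{1..H}. f d)" if j: "j < Suc H" for j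
  proof -
    have "(\<Sum>j'<Suc H. if j' = j then 0 else f (if j \<le> j' then j' - j else j - j'))
        = (\<Sum>j'<Suc H. (if j' < j then f (j - j') else 0) + (if j < j' then f (j' - j) else 0))"
      by (intro sum.cong) auto
    also have "\<dots> = (\<Sum>j'\<in>{j'\<in>{..<Suc H}. j' < j}. f (j - j')) + (\<Sum>j'\<in>{j'\<in>{..<Suc H}. j < j'}. f (j' - j))"
    proof -
      have 1: "(\<Sum>j'<Suc H. if j' < j then f (j - j') else 0) = (\<Sum>j'\<in>{j'\<in>{..<Suc H}. j' < j}. f (j - j'))"
        by (rule sum.inter_filter[symmetric]) simp
      have 2: "(\<Sum>j'<Suc H. if j < j' then f (j' - j) else 0) = (\<Sum>j'\<in>{j'\<in>{..<Suc H}. j < j'}. f (j' - j))"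
        by (rule sum.inter_filter[symmetric]) simp
      show ?thesis by (simp only: sum.distrib 1 2)
    qed
    also have "(\<Sum>j'\<in>{j'\<in>{..<Suc H}. j' < j}. f (j - j')) = (\<Sum>d\<in>(\<lambda>j'. j - j') ` {j'\<in>{..<Suc H}. j' < j}. f d)"
      by (subst sum.reindex) (auto simp: inj_on_def)
    also have "\<dots> \<le> (\<Sum>d\<in>{1..H}. f d)"
      using j by (intro sum_mono2) (auto simp: f0)
    also have "(\<Sum>j'\<in>{j'\<in>{..<Suc H}. j < j'}. f (j' - j)) = (\<Sum>d\<in>(\<lambda>j'. j' - j) ` {j'\<in>{..<Suc H}. j < j'}. f d)"
      by (subst sum.reindex) (auto simp: inj_on_def)
    also have "\<dots> \<le> (\<Sum>d\<in>{1..H}. f d)"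
      by (intro sum_mono2) (auto simp: f0)
    finally show ?thesis by simp
  qed
  have "(\<Sum>j<Suc H. \<Sum>j'<Suc H. if j' = j then 0 else f (if j \<le> j' then j' - j else j - j'))
      \<le> (\<Sum>j<Suc H. 2 * (\<Sum>d\<in>{1..H}. f d))"
    by (intro sum_mono per) auto
  also have "\<dots> = 2 * real (Suc H) * (\<Sum>d\<in>{1..H}. f d)" by simp
  finally show ?thesis .
qed



lemma swap3: "(\<Sum>a\<in>A. \<Sum>b\<in>B. \<Sum>c\<in>C. f a b c) = (\<Sum>b\<in>B. \<Sum>c\<in>C. \<Sum>a\<in>A. f a b c)"
proof -
  have "(\<Sum>a\<in>A. \<Sum>b\<in>B. \<Sum>c\<in>C. f a b c) = (\<Sum>b\<in>B. \<Sum>a\<in>A. \<Sum>c\<in>C. f a b c)" by (rule sum.swap)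
  also have "\<dots> = (\<Sum>b\<in>B. \<Sum>c\<in>C. \<Sum>a\<in>A. f a b c)" by (rule sum.cong[OF refl], rule sum.swap)
  finally show ?thesis .
qed

lemma swap4: "(\<Sum>i\<in>A. \<Sum>r\<in>B. \<Sum>j\<in>C. \<Sum>j'\<in>D. f i r j j') = (\<Sum>j\<in>C. \<Sum>j'\<in>D. \<Sum>r\<in>B. \<Sum>i\<in>A. f i r j j')"
proof -
  have "(\<Sum>i\<in>A. \<Sum>r\<in>B. \<Sum>j\<in>C. \<Sum>j'\<in>D. f i r j j') = (\<Sum>r\<in>B. \<Sum>j\<in>C. \<Sum>i\<in>A. \<Sum>j'\<in>D. f i r j j')"
    by (rule swap3)
  also have "\<dots> = (\<Sum>j\<in>C. \<Sum>r\<in>B. \<Sum>i\<in>A. \<Sum>j'\<in>D. f i r j j')" by (rule sum.swap)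
  also have "\<dots> = (\<Sum>j\<in>C. \<Sum>r\<in>B. \<Sum>j'\<in>D. \<Sum>i\<in>A. f i r j j')"
    by (rule sum.cong[OF refl], rule sum.cong[OF refl], rule sum.swap)
  also have "\<dots> = (\<Sum>j\<in>C. \<Sum>j'\<in>D. \<Sum>r\<in>B. \<Sum>i\<in>A. f i r j j')"
    by (rule sum.cong[OF refl], rule sum.swap)
  finally show ?thesis .
qed

lemma S_bound_sym:
  fixes x :: "nat \<Rightarrow> real"
  assumes SB: "\<And>d. 1 \<le> d \<Longrightarrow> d \<le> H \<Longrightarrow> norm (\<Sum>i<N. ee (real d * x i)) \<le> G d"
    and j: "j < Suc H" "j' < Suc H" "j \<noteq> j'"
  shows "norm (\<Sum>i<N. ee ((real j - real j') * x i)) \<le> G (if j \<le> j' then j' - j else j - j')"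
proof (cases "j \<le> j'")
  case True
  then have e: "real j - real j' = - real (j' - j)" by (simp add: of_nat_diff)
  have "(\<Sum>i<N. ee ((real j - real j') * x i)) = cnj (\<Sum>i<N. ee (real (j' - j) * x i))"
    unfolding e by (simp add: ee_minus)
  then have "norm (\<Sum>i<N. ee ((real j - real j') * x i)) = norm (cnj (\<Sum>i<N. ee (real (j' - j) * x i)))"
    by simp
  also have "\<dots> = norm (\<Sum>i<N. ee (real (j' - j) * x i))" by (rule complex_mod_cnj)
  also have "\<dots> \<le> G (j' - j)" using SB[of "j' - j"] True j by simp
  finally show ?thesis using True by simp
next
  case False
  then have e: "real j - real j' = real (j - j')" by (simp add: of_nat_diff)
  show ?thesis unfolding e using SB[of "j - j'"] False j by simp
qed

lemma fourier_sum:
  fixes x :: "nat \<Rightarrow> real" and G :: "nat \<Rightarrow> real"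
  assumes HL: "2 * H < L"
    and SB: "\<And>d. 1 \<le> d \<Longrightarrow> d \<le> H \<Longrightarrow> norm (\<Sum>i<N. ee (real d * x i)) \<le> G d"
  shows "(\<Sum>i<N. (\<Sum>r<R. fej H (x i - u - real r / real L)) / real L)
           \<le> real N * real R / real L + 2 * (\<Sum>d\<in>{1..H}. G d / real d)"
proof -
  have L0: "real L > 0" using HL by simp
  define W where "W j j' = (\<Sum>r<R. ee ((real j - real j') * (- u - real r / real L)))" for j j' :: nat
  define S where "S j j' = (\<Sum>i<N. ee ((real j - real j') * x i))" for j j' :: nat
  define K where "K j j' = W j j' * S j j'" for j j'
  define T where "T = (\<Sum>i<N. (\<Sum>r<R. fej H (x i - u - real r / real L)) / real L)"
  have "complex_of_real T = (\<Sum>i<N. \<Sum>r<R. \<Sum>j<Suc H. \<Sum>j'<Suc H.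
        ee ((real j - real j') * (x i - u - real r / real L))) / (of_nat (Suc H) * of_nat L)"
    unfolding T_def by (simp add: fej_expand sum_divide_distrib)
  also have "(\<Sum>i<N. \<Sum>r<R. \<Sum>j<Suc H. \<Sum>j'<Suc H. ee ((real j - real j') * (x i - u - real r / real L)))
      = (\<Sum>j<Suc H. \<Sum>j'<Suc H. \<Sum>r<R. \<Sum>i<N. ee ((real j - real j') * (- u - real r / real L)) * ee ((real j - real j') * x i))"
  proof -
    have eq: "ee ((real j - real j') * (x i - u - real r / real L)) =
          ee ((real j - real j') * (- u - real r / real L)) * ee ((real j - real j') * x i)" for i r j j'
      by (simp add: ee_add[symmetric] algebra_simps)
    have "(\<Sum>i<N. \<Sum>r<R. \<Sum>j<Suc H. \<Sum>j'<Suc H. ee ((real j - real j') * (x i - u - real r / real L)))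
      = (\<Sum>i<N. \<Sum>r<R. \<Sum>j<Suc H. \<Sum>j'<Suc H. ee ((real j - real j') * (- u - real r / real L)) * ee ((real j - real j') * x i))"
      by (intro sum.cong refl eq)
    then show ?thesis by (rule trans) (rule swap4)
  qed
  also have "\<dots> = (\<Sum>j<Suc H. \<Sum>j'<Suc H. K j j')"
    unfolding K_def W_def S_def by (simp add: sum_product)
  also have "\<dots> = (\<Sum>j<Suc H. \<Sum>j'<Suc H. (if j' = j then of_nat (R * N) else 0) + (if j' = j then 0 else K j j'))"
    by (intro sum.cong refl) (auto simp: K_def W_def S_def)
  also have "\<dots> = of_nat (Suc H) * of_nat (R * N) + (\<Sum>j<Suc H. \<Sum>j'<Suc H. if j' = j then 0 else K j j')"
    by (simp add: sum.distrib algebra_simps)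
  finally have Teq: "complex_of_real T = (of_nat (Suc H) * of_nat (R * N) + Z) / (of_nat (Suc H) * of_nat L)"
    if "Z = (\<Sum>j<Suc H. \<Sum>j'<Suc H. if j' = j then 0 else K j j')" for Z
    using that by simp
  define Z where "Z = (\<Sum>j<Suc H. \<Sum>j'<Suc H. if j' = j then 0 else K j j')"
  define f where "f d = (if 1 \<le> d \<and> d \<le> H then G d / real d else 0)" for d
  have f0: "0 \<le> f d" for d
  proof (cases "1 \<le> d \<and> d \<le> H")
    case True
    then have "0 \<le> G d" using SB[of d] norm_ge_zero order_trans by blast
    then show ?thesis unfolding f_def using True by simp
  qed (auto simp: f_def)
  have Kb: "norm (K j j') \<le> real L * f (if j \<le> j' then j' - j else j - j')"
    if j: "j < Suc H" "j' < Suc H" "j \<noteq> j'" for j j'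
  proof -
    define k where "k = int j' - int j"
    define d where "d = (if j \<le> j' then j' - j else j - j')"
    have kd: "\<bar>real_of_int k\<bar> = real d" unfolding k_def d_def by auto
    have d1: "1 \<le> d" "d \<le> H" using j unfolding d_def by auto
    have "\<bar>real_of_int k / real L\<bar> = real d / real L" using kd L0 by simp
    then have t1: "0 < \<bar>real_of_int k / real L\<bar>" "\<bar>real_of_int k / real L\<bar> \<le> 1/2"
      using d1 L0 HL by (auto simp: field_simps)
    have "W j j' = (\<Sum>r<R. ee ((real j - real j') * (- u)) * ee (real_of_int k / real L) ^ r)"
      unfolding W_def
    proof (intro sum.cong refl)
      fix r
      have "(real j - real j') * (- u - real r / real L) = (real j - real j') * (- u) + real r * (real_of_int k / real L)"
        unfolding k_def by (simp add: algebra_simps diff_divide_distrib)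
      then show "ee ((real j - real j') * (- u - real r / real L)) = ee ((real j - real j') * (- u)) * ee (real_of_int k / real L) ^ r"
        by (simp only: ee_add ee_pow)
    qed
    then have "norm (W j j') = norm (\<Sum>r<R. ee (real_of_int k / real L) ^ r)"
      by (simp add: sum_distrib_left[symmetric] norm_mult)
    also have "\<dots> \<le> 1 / \<bar>real_of_int k / real L\<bar>" by (rule ee_geo_bound[OF t1])
    also have "\<dots> = real L / real d" using kd L0 by simp
    finally have Wb: "norm (W j j') \<le> real L / real d" .
    have Sb: "norm (S j j') \<le> G d" unfolding S_def d_def by (rule S_bound_sym[OF SB j])
    have "norm (K j j') = norm (W j j') * norm (S j j')" unfolding K_def by (simp add: norm_mult)
    also have "\<dots> \<le> (real L / real d) * G d"
      using Wb Sb by (intro mult_mono) auto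
    also have "\<dots> = real L * f d" unfolding f_def using d1 by simp
    finally show ?thesis unfolding d_def .
  qed
  have "norm Z \<le> (\<Sum>j<Suc H. \<Sum>j'<Suc H. if j' = j then 0 else norm (K j j'))"
    unfolding Z_def by (rule order_trans[OF norm_sum sum_mono], rule order_trans[OF norm_sum sum_mono]) auto
  also have "\<dots> \<le> (\<Sum>j<Suc H. \<Sum>j'<Suc H. if j' = j then 0 else real L * f (if j \<le> j' then j' - j else j - j'))"
  proof (intro sum_mono)
    fix j j' assume jj: "j \<in> {..<Suc H}" "j' \<in> {..<Suc H}"
    show "(if j' = j then 0 else norm (K j j')) \<le> (if j' = j then 0 else real L * f (if j \<le> j' then j' - j else j - j'))"
      using Kb[of j j'] jj by auto
  qed
  also have "\<dots> = real L * (\<Sum>j<Suc H. \<Sum>j'<Suc H. if j' = j then 0 else f (if j \<le> j' then j' - j else j - j'))"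
    unfolding sum_distrib_left by (intro sum.cong refl) simp
  also have "\<dots> \<le> real L * (2 * real (Suc H) * (\<Sum>d\<in>{1..H}. f d))"
    using L0 by (intro mult_left_mono pair_bound f0) auto
  also have "(\<Sum>d\<in>{1..H}. f d) = (\<Sum>d\<in>{1..H}. G d / real d)"
    unfolding f_def by (intro sum.cong) auto
  finally have Zb: "norm Z \<le> real L * (2 * real (Suc H) * (\<Sum>d\<in>{1..H}. G d / real d))" .
  have "complex_of_real T = of_nat (Suc H) * of_nat (R*N) / (of_nat (Suc H) * of_nat L) + Z / (of_nat (Suc H) * of_nat L)"
    using Teq[OF Z_def] by (simp only: add_divide_distrib)
  also have "of_nat (Suc H) * of_nat (R*N) / (of_nat (Suc H) * of_nat L) = (of_nat (R*N) / of_nat L :: complex)"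
    by (rule mult_divide_mult_cancel_left) (simp only: of_nat_eq_0_iff nat.distinct(1) not_False_eq_True)
  also have "(of_nat (R*N) / of_nat L :: complex) = complex_of_real (real N * real R / real L)" by simp
  finally have "complex_of_real (T - real N * real R / real L) = Z / (of_nat (Suc H) * of_nat L)"
    by simp
  then have "norm (complex_of_real (T - real N * real R / real L)) = norm (Z / (of_nat (Suc H) * of_nat L))"
    by (rule arg_cong)
  then have "\<bar>T - real N * real R / real L\<bar> = norm Z / (real L * real (Suc H))"
    by (simp only: norm_of_real norm_divide norm_mult norm_of_nat mult.commute)
  also have "\<dots> \<le> real L * (2 * real (Suc H) * (\<Sum>d\<in>{1..H}. G d / real d)) / (real L * real (Suc H))"
    using Zb L0 by (intro divide_right_mono) auto
  also have "\<dots> = 2 * (\<Sum>d\<in>{1..H}. G d / real d)"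
  proof -
    have "real (Suc H) > 0" by simp
    then show ?thesis using L0 by (simp only: field_simps) simp
  qed
  finally show ?thesis unfolding T_def by linarith
qed



lemma et_main:
  fixes x :: "nat \<Rightarrow> real" and G :: "nat \<Rightarrow> real"
  assumes \<delta>0: "\<delta> > 0" and L\<delta>: "real L * \<delta> \<ge> 1" and HL: "2 * H < L" and ab: "a \<le> b"
    and SB: "\<And>d. 1 \<le> d \<Longrightarrow> d \<le> H \<Longrightarrow> norm (\<Sum>i<N. ee (real d * x i)) \<le> G d"
  shows "real (card {i. i < N \<and> (\<exists>m\<in>\<int>. x i - m \<in> {a..b})})
     \<le> real N * (b - a) + 2 * real N * \<delta> + real N / real L + 4 * real N / (real (Suc H) * \<delta>)
        + 2 * (\<Sum>d\<in>{1..H}. G d / real d)"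
proof -
  define C where "C = {i. i < N \<and> (\<exists>m\<in>\<int>. x i - m \<in> {a..b})}"
  have Csub: "C \<subseteq> {..<N}" unfolding C_def by auto
  then have cN: "card C \<le> N" by (metis card_lessThan card_mono finite_lessThan)
  have L0: "real L > 0" using HL by simp
  define \<eta> where "\<eta> = 4 / (real (Suc H) * \<delta>)"
  have \<eta>0: "\<eta> \<ge> 0" unfolding \<eta>_def using \<delta>0 by simp
  define E where "E = 2 * (\<Sum>d\<in>{1..H}. G d / real d)"
  have E0: "E \<ge> 0" unfolding E_def
  proof -
    have g: "0 \<le> G d" if "d \<in> {1..H}" for d
    proof -
      have "norm (\<Sum>i<N. ee (real d * x i)) \<le> G d" using SB[of d] that by auto
      then show "0 \<le> G d" by (rule order_trans[OF norm_ge_zero])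
    qed
    have "G d / real d \<ge> 0" if "d \<in> {1..H}" for d using g[OF that] by simp
    then show "0 \<le> 2 * (\<Sum>d\<in>{1..H}. G d / real d)" by (intro mult_nonneg_nonneg sum_nonneg) auto
  qed
  define R where "R = nat \<lceil>real L * (b - a + 2 * \<delta>)\<rceil>"
  have pos: "real L * (b - a + 2 * \<delta>) > 0" using L0 ab \<delta>0 by simp
  have R1: "real R \<ge> real L * (b - a + 2 * \<delta>)" unfolding R_def using pos by linarith
  have R2: "real R < real L * (b - a + 2 * \<delta>) + 1" unfolding R_def using pos by linarith
  have RL: "real R / real L \<le> b - a + 2 * \<delta> + 1 / real L"
    using R2 L0 by (simp add: field_simps)
  have main: "real (card C) \<le> real N * (real R / real L) + E + \<eta> * real N"
  proof (cases "R \<ge> L")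
    case True
    then have "real R / real L \<ge> 1" using L0 by simp
    then have "real N * 1 \<le> real N * (real R / real L)" by (intro mult_left_mono) auto
    then have "real N \<le> real N * (real R / real L)" by simp
    then show ?thesis using cN E0 \<eta>0 by (smt (verit) of_nat_le_iff mult_nonneg_nonneg of_nat_0_le_iff)
  next
    case False
    then have RLn: "R \<le> L" by simp
    define u where "u = a - \<delta>"
    define \<Phi> where "\<Phi> y = (\<Sum>r<R. fej H (y - u - real r / real L)) / real L" for y
    have \<Phi>0: "\<Phi> y \<ge> 0" for y unfolding \<Phi>_def using L0 by (simp add: sum_nonneg fej_nonneg)
    have \<Phi>1: "\<Phi> (x i) \<ge> 1 - \<eta>" if "i \<in> C" for i
    proof -
      have "\<exists>m\<in>\<int>. x i - m \<in> {a..b}" using that unfolding C_def by simp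
      then obtain m where m: "m \<in> \<int>" "x i - m \<in> {a..b}" by blast
      define y where "y = x i - m"
      have per: "fej H (x i - u - real r / real L) = fej H (y - u - real r / real L)" for r
      proof -
        have eq: "x i - u - real r / real L = (y - u - real r / real L) + m" unfolding y_def by simp
        show ?thesis unfolding eq by (rule fej_periodic[OF m(1)])
      qed
      have full: "(\<Sum>r<L. fej H (y - u - real r / real L)) = real L"
        using fej_full[OF HL, of "y - u"] by simp
      have split: "(\<Sum>r<L. fej H (y - u - real r / real L)) =
          (\<Sum>r<R. fej H (y - u - real r / real L)) + (\<Sum>r\<in>{R..<L}. fej H (y - u - real r / real L))"
      proof -
        have U: "{..<L} = {..<R} \<union> {R..<L}" using RLn by auto
        show ?thesis unfolding U by (rule sum.union_disjoint) (simp_all add: set_eq_iff)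
      qed
      have tail: "(\<Sum>r\<in>{R..<L}. fej H (y - (a - \<delta>) - real r / real L)) / real L \<le> \<eta>"
        unfolding \<eta>_def
        by (rule fej_tail[OF \<delta>0 L\<delta>]) (use m RLn R1 L0 in \<open>auto simp: y_def field_simps\<close>)
      have "\<Phi> (x i) = (\<Sum>r<R. fej H (y - u - real r / real L)) / real L"
        unfolding \<Phi>_def per ..
      also have "\<dots> = 1 - (\<Sum>r\<in>{R..<L}. fej H (y - u - real r / real L)) / real L"
        using full split L0 by (simp add: field_simps)
      finally show ?thesis using tail unfolding u_def by linarith
    qed
    have "real (card C) * (1 - \<eta>) = (\<Sum>i\<in>C. 1 - \<eta>)" by simp
    also have "\<dots> \<le> (\<Sum>i\<in>C. \<Phi> (x i))" by (intro sum_mono \<Phi>1)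
    also have "\<dots> \<le> (\<Sum>i<N. \<Phi> (x i))" using Csub by (intro sum_mono2) (auto simp: \<Phi>0)
    also have "\<dots> \<le> real N * real R / real L + E"
      unfolding \<Phi>_def E_def by (rule fourier_sum[OF HL SB])
    finally have 1: "real (card C) * (1 - \<eta>) \<le> real N * real R / real L + E" .
    have 2: "\<eta> * real (card C) \<le> \<eta> * real N" using cN \<eta>0 by (simp add: mult_left_mono)
    show ?thesis using 1 2 by (simp add: algebra_simps)
  qed
  have "real N * (real R / real L) \<le> real N * (b - a + 2 * \<delta> + 1 / real L)"
    using RL by (intro mult_left_mono) auto
  then have "real (card C) \<le> real N * (b - a + 2 * \<delta> + 1 / real L) + E + \<eta> * real N"
    using main by linarith
  then show ?thesis unfolding C_def E_def \<eta>_def by (simp add: algebra_simps)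
qed



lemma shift_aux:
  fixes f :: "nat \<Rightarrow> 'a::comm_monoid_add"
  shows "sum f {q*k..<q*k+k} = (\<Sum>a<k. f (q*k + a))"
  using sum.shift_bounds_nat_ivl[of f 0 "q*k" k] by (simp add: add.commute atLeast0LessThan)

lemma Q_Suc_coeff:
  "coeff (Qpoly p \<xi> j (Suc r)) i =
     (\<Sum>m<p. \<xi> ^ (j * m) * (if i < m * p ^ r then 0 else coeff (Qpoly p \<xi> m r) (i - m * p ^ r)))"
  by (simp only: Qpoly.simps coeff_sum coeff_smult coeff_monom_mult mult_1_left)

lemma sum_split_mult:
  fixes f :: "nat \<Rightarrow> 'a::comm_monoid_add"
  shows "(\<Sum>j<n*k. f j) = (\<Sum>q<n. \<Sum>a<k. f (q*k + a))"
proof -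
  have "(\<Sum>j<n*k. f j) = (\<Sum>q<n. sum f {q*k..<q*k+k})" by (rule sum.nat_group[symmetric])
  also have "\<dots> = (\<Sum>q<n. \<Sum>a<k. f (q*k + a))"
    by (rule sum.cong[OF refl shift_aux])
  finally show ?thesis .
qed

lemma Q_zero:
  assumes "p > 0" "p ^ r \<le> i"
  shows "coeff (Qpoly p \<xi> l r) i = 0"
  using assms(2)
proof (induction r arbitrary: l i)
  case 0 then show ?case by simp
next
  case (Suc r)
  have "coeff (Qpoly p \<xi> l (Suc r)) i =
     (\<Sum>m<p. \<xi> ^ (l * m) * (if i < m * p ^ r then 0 else coeff (Qpoly p \<xi> m r) (i - m * p ^ r)))"
    by (rule Q_Suc_coeff)
  also have "\<dots> = 0"
  proof (intro sum.neutral ballI)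
    fix m assume m: "m \<in> {..<p}"
    have "m * p ^ r + p ^ r \<le> p * p ^ r"
      using m by (metis add.commute lessThan_iff mult_Suc mult_le_mono1 Suc_le_eq)
    then have "p ^ r \<le> i - m * p ^ r" using Suc.prems by simp
    then show "\<xi> ^ (l * m) * (if i < m * p ^ r then 0 else coeff (Qpoly p \<xi> m r) (i - m * p ^ r)) = 0"
      using Suc.IH by simp
  qed
  finally show ?case .
qed

lemma Q_step:
  assumes "p > 0" "i < p ^ Suc r"
  shows "coeff (Qpoly p \<xi> l (Suc r)) i = \<xi> ^ (l * (i div p ^ r)) * coeff (Qpoly p \<xi> (i div p ^ r) r) (i mod p ^ r)"
proof -
  define q where "q = i div p ^ r"
  have pr: "p ^ r > 0" using assms by simp
  have qp: "q < p" unfolding q_def using assms pr by (simp add: div_less_iff_less_mult mult.commute)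
  have "coeff (Qpoly p \<xi> l (Suc r)) i =
     (\<Sum>m<p. \<xi> ^ (l * m) * (if i < m * p ^ r then 0 else coeff (Qpoly p \<xi> m r) (i - m * p ^ r)))"
    by (rule Q_Suc_coeff)
  also have "\<dots> = (\<Sum>m<p. if m = q then \<xi> ^ (l * q) * coeff (Qpoly p \<xi> q r) (i mod p ^ r) else 0)"
  proof (intro sum.cong refl)
    fix m assume m: "m \<in> {..<p}"
    show "\<xi> ^ (l * m) * (if i < m * p ^ r then 0 else coeff (Qpoly p \<xi> m r) (i - m * p ^ r)) =
          (if m = q then \<xi> ^ (l * q) * coeff (Qpoly p \<xi> q r) (i mod p ^ r) else 0)"
    proof (cases "m = q")
      case True
      have "i = q * p ^ r + i mod p ^ r" unfolding q_def by (rule div_mult_mod_eq[symmetric])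
      then have "\<not> i < m * p ^ r" "i - m * p ^ r = i mod p ^ r" using True by (metis add_diff_cancel_left' not_add_less1)+
      then show ?thesis using True by simp
    next
      case False
      show ?thesis
      proof (cases "i < m * p ^ r")
        case True then show ?thesis using False by simp
      next
        case nl: False
        have "m * p ^ r \<le> i" using nl by simp
        then have "m * p ^ r div p ^ r \<le> i div p ^ r" by (rule div_le_mono)
        then have "m \<le> q" unfolding q_def using pr assms(1) by simp
        then have "m < q" using False by simp
        then have "Suc m * p ^ r \<le> q * p ^ r" by (intro mult_le_mono1) simp
        also have "q * p ^ r \<le> i" unfolding q_def by (metis div_mult_mod_eq le_add1)
        finally have "p ^ r \<le> i - m * p ^ r" by simp
        then show ?thesis using False Q_zero[OF assms(1)] by simp
      qed
    qed
  qed
  also have "\<dots> = \<xi> ^ (l * q) * coeff (Qpoly p \<xi> q r) (i mod p ^ r)"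
    using qp by (simp add: sum.delta)
  finally show ?thesis unfolding q_def .
qed

lemma Q3_coeff:
  assumes "p > 0" "a < p" "b < p" "c < p"
  shows "coeff (Qpoly p \<xi> 0 3) (c * p^2 + (b * p + a)) = \<xi> ^ (c * b) * \<xi> ^ (b * a)"
proof -
  have i1: "b * p + a < p ^ 2"
  proof -
    have "b * p + a < b * p + p" using assms by simp
    also have "\<dots> = Suc b * p" by simp
    also have "\<dots> \<le> p * p" using assms by (intro mult_le_mono1) simp
    finally show ?thesis by (simp add: power2_eq_square)
  qed
  have i0: "c * p^2 + (b * p + a) < p ^ Suc 2"
  proof -
    have "c * p^2 + (b * p + a) < c * p^2 + p^2" using i1 by simp
    also have "\<dots> = Suc c * p^2" by simp
    also have "\<dots> \<le> p * p^2" using assms by (intro mult_le_mono1) simp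
    finally show ?thesis by (metis power_Suc)
  qed
  have pp: "p^2 \<noteq> 0" using assms by simp
  have "(c * p^2 + (b * p + a)) div p^2 = ((b * p + a) + c * p^2) div p^2" by (simp add: add.commute)
  also have "\<dots> = c + (b * p + a) div p^2" by (rule div_mult_self1[OF pp])
  also have "(b * p + a) div p^2 = 0" using i1 by simp
  finally have d1: "(c * p^2 + (b * p + a)) div p^2 = c" by simp
  have m1: "(c * p^2 + (b * p + a)) mod p^2 = b * p + a" using i1 by simp
  have "coeff (Qpoly p \<xi> 0 3) (c * p^2 + (b * p + a)) = coeff (Qpoly p \<xi> c 2) (b * p + a)"
    using Q_step[OF assms(1) i0, of \<xi> 0] d1 m1 by (simp add: numeral_3_eq_3)
  also have "\<dots> = \<xi> ^ (c * b) * coeff (Qpoly p \<xi> b 1) a"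
  proof -
    have "b * p + a < p ^ Suc 1" using i1 by (simp add: power2_eq_square)
    from Q_step[OF assms(1) this, of \<xi> c] show ?thesis
      using assms by (simp add: numeral_2_eq_2)
  qed
  also have "coeff (Qpoly p \<xi> b 1) a = \<xi> ^ (b * a)"
  proof -
    have "a < p ^ Suc 0" using assms by simp
    from Q_step[OF assms(1) this, of \<xi> b] show ?thesis by simp
  qed
  finally show ?thesis .
qed



lemma unit_cnj: fixes z :: complex assumes "norm z = 1" shows "z * cnj z = 1"
  using complex_norm_square[of z] assms by simp

lemma root_sum:
  fixes \<zeta> :: complex
  assumes p0: "p > 0" and ord: "\<And>n. \<zeta> ^ n = 1 \<longleftrightarrow> p dvd n"
  shows "(\<Sum>b<p. (\<zeta> ^ e) ^ b) = (if p dvd e then of_nat p else 0)"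
proof (cases "p dvd e")
  case True
  then have "\<zeta> ^ e = 1" using ord by simp
  then show ?thesis using True by simp
next
  case False
  then have "\<zeta> ^ e \<noteq> 1" using ord by simp
  moreover have "(\<zeta> ^ e) ^ p = 1" using ord by (simp add: power_mult[symmetric])
  ultimately show ?thesis using False geo_zero by simp
qed

lemma dvd_diag:
  fixes a a' p :: nat
  assumes "a < p" "a' < p"
  shows "p dvd (a + (p - 1) * a') \<longleftrightarrow> a = a'"
proof
  assume "a = a'"
  then have "a + (p - 1) * a' = p * a'" using assms by (cases p) auto
  then show "p dvd (a + (p - 1) * a')" by simp
next
  assume d: "p dvd (a + (p - 1) * a')"
  then obtain k where k: "a + (p - 1) * a' = p * k" by blast
  have e: "a + p * a' = p * k + a'" using k assms by (cases p) (auto simp: algebra_simps)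
  have "a = (a + p * a') mod p" using assms by simp
  also have "\<dots> = (p * k + a') mod p" by (simp only: e)
  also have "\<dots> = a'" using assms by simp
  finally show "a = a'" .
qed

lemma parseval:
  fixes \<zeta> v :: complex
  assumes p0: "p > 0" and ord: "\<And>n. \<zeta> ^ n = 1 \<longleftrightarrow> p dvd n" and v: "norm v = 1"
  shows "(\<Sum>b<p. (norm (\<Sum>a<p. (\<zeta> ^ b * v) ^ a))^2) = real p ^ 2"
proof -
  have zp: "\<zeta> ^ p = 1" using ord by simp
  have nz: "norm \<zeta> = 1"
  proof -
    have "norm \<zeta> ^ p = 1 ^ p" using zp by (metis norm_one norm_power power_one)
    then show ?thesis using p0 by (subst (asm) power_eq_iff_eq_base) auto
  qed
  have cz: "cnj \<zeta> = \<zeta> ^ (p - 1)"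
  proof -
    have "\<zeta> * cnj \<zeta> = \<zeta> * \<zeta> ^ (p - 1)"
      using unit_cnj[OF nz] zp p0 by (metis Suc_diff_1 power_Suc)
    moreover have "\<zeta> \<noteq> 0" using nz by auto
    ultimately show ?thesis by simp
  qed
  have tm: "(\<zeta> ^ b * v) ^ a * cnj ((\<zeta> ^ b * v) ^ a') = (v ^ a * cnj v ^ a') * (\<zeta> ^ (a + (p - 1) * a')) ^ b"
    for a a' b :: nat
  proof -
    have "(\<zeta> ^ b * v) ^ a * cnj ((\<zeta> ^ b * v) ^ a') = \<zeta> ^ (b * a) * \<zeta> ^ ((p - 1) * (b * a')) * (v ^ a * cnj v ^ a')"
      by (simp add: cz power_mult_distrib power_mult[symmetric] mult_ac)
    also have "\<zeta> ^ (b * a) * \<zeta> ^ ((p - 1) * (b * a')) = (\<zeta> ^ (a + (p - 1) * a')) ^ b"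
      by (simp add: power_add[symmetric] power_mult[symmetric] algebra_simps)
    finally show ?thesis by (simp add: mult_ac)
  qed
  have "complex_of_real (\<Sum>b<p. (norm (\<Sum>a<p. (\<zeta> ^ b * v) ^ a))^2)
      = (\<Sum>b<p. (\<Sum>a<p. (\<zeta> ^ b * v) ^ a) * cnj (\<Sum>a<p. (\<zeta> ^ b * v) ^ a))"
    by (simp only: of_real_sum complex_norm_square)
  also have "\<dots> = (\<Sum>b<p. \<Sum>a<p. \<Sum>a'<p. (v ^ a * cnj v ^ a') * (\<zeta> ^ (a + (p - 1) * a')) ^ b)"
    by (simp only: cnj_sum sum_product tm)
  also have "\<dots> = (\<Sum>a<p. \<Sum>a'<p. \<Sum>b<p. (v ^ a * cnj v ^ a') * (\<zeta> ^ (a + (p - 1) * a')) ^ b)"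
  proof -
    have "(\<Sum>b<p. \<Sum>a<p. \<Sum>a'<p. (v ^ a * cnj v ^ a') * (\<zeta> ^ (a + (p - 1) * a')) ^ b)
      = (\<Sum>a<p. \<Sum>b<p. \<Sum>a'<p. (v ^ a * cnj v ^ a') * (\<zeta> ^ (a + (p - 1) * a')) ^ b)" by (rule sum.swap)
    also have "\<dots> = (\<Sum>a<p. \<Sum>a'<p. \<Sum>b<p. (v ^ a * cnj v ^ a') * (\<zeta> ^ (a + (p - 1) * a')) ^ b)"
      by (rule sum.cong[OF refl], rule sum.swap)
    finally show ?thesis .
  qed
  also have "\<dots> = (\<Sum>a<p. \<Sum>a'<p. if a' = a then of_nat p else 0)"
  proof (intro sum.cong refl)
    fix a a' assume a: "a \<in> {..<p}" "a' \<in> {..<p}"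
    have "(\<Sum>b<p. (v ^ a * cnj v ^ a') * (\<zeta> ^ (a + (p - 1) * a')) ^ b)
        = (v ^ a * cnj v ^ a') * (\<Sum>b<p. (\<zeta> ^ (a + (p - 1) * a')) ^ b)" by (simp add: sum_distrib_left)
    also have "\<dots> = (v ^ a * cnj v ^ a') * (if a = a' then of_nat p else 0)"
      using root_sum[OF p0 ord, of "a + (p - 1) * a'"] dvd_diag[of a p a'] a by simp
    also have "\<dots> = (if a' = a then of_nat p else 0)"
    proof (cases "a = a'")
      case True
      have "v ^ a * cnj v ^ a = (v * cnj v) ^ a" by (simp add: power_mult_distrib)
      also have "\<dots> = 1" using unit_cnj[OF v] by simp
      finally show ?thesis using True by simp
    qed simp
    finally show "(\<Sum>b<p. (v ^ a * cnj v ^ a') * (\<zeta> ^ (a + (p - 1) * a')) ^ b) = (if a' = a then of_nat p else 0)" .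
  qed
  also have "\<dots> = of_nat p * of_nat p" by simp
  finally have "complex_of_real (\<Sum>b<p. (norm (\<Sum>a<p. (\<zeta> ^ b * v) ^ a))^2) = complex_of_real (real p ^ 2)"
    by (simp add: power2_eq_square)
  then show ?thesis using of_real_eq_iff by blast
qed



lemma xi_ord:
  assumes p: "prime p" and xi: "primitive_root_of_unity p \<xi>"
  shows "\<xi> ^ n = 1 \<longleftrightarrow> p dvd n"
proof -
  have p0: "p > 0" using p prime_gt_0_nat by blast
  have xp: "\<xi> ^ p = 1" and prim: "\<And>k. 0 < k \<Longrightarrow> k < p \<Longrightarrow> \<xi> ^ k \<noteq> 1"
    using xi unfolding primitive_root_of_unity_def by auto
  have "\<xi> ^ n = (\<xi> ^ p) ^ (n div p) * \<xi> ^ (n mod p)"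
    by (metis div_mult_mod_eq power_add power_mult mult.commute)
  then have e: "\<xi> ^ n = \<xi> ^ (n mod p)" using xp by simp
  show ?thesis
  proof (cases "n mod p = 0")
    case True then show ?thesis using e by (simp add: dvd_eq_mod_eq_0)
  next
    case False
    then have "\<xi> ^ (n mod p) \<noteq> 1" using prim p0 by simp
    then show ?thesis using e False by (simp add: dvd_eq_mod_eq_0)
  qed
qed

lemma zeta_ord:
  assumes p: "prime p" and xi: "primitive_root_of_unity p \<xi>" and d: "\<not> p dvd d"
  shows "(\<xi> ^ d) ^ n = 1 \<longleftrightarrow> p dvd n"
proof -
  have "(\<xi> ^ d) ^ n = \<xi> ^ (d * n)" by (simp add: power_mult)
  then have "(\<xi> ^ d) ^ n = 1 \<longleftrightarrow> p dvd (d * n)" using xi_ord[OF p xi] by simp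
  also have "\<dots> \<longleftrightarrow> p dvd n" using d p by (simp add: prime_dvd_mult_iff)
  finally show ?thesis .
qed

lemma amgm: fixes x y :: real shows "x * y \<le> (x^2 + y^2) / 2"
proof -
  have "0 \<le> (x - y)^2" by simp
  then show ?thesis by (simp add: power2_eq_square algebra_simps)
qed

lemma trivial_bound: "norm (\<Sum>j<N. ee (y j)) \<le> real N"
proof -
  have "norm (\<Sum>j<N. ee (y j)) \<le> (\<Sum>j<N. norm (ee (y j)))" by (rule norm_sum)
  then show ?thesis by simp
qed

lemma S_bound:
  fixes s :: "nat \<Rightarrow> real" and t :: real
  assumes p: "prime p" and xi: "primitive_root_of_unity p \<xi>"
    and hs: "\<forall>j < p ^ 3. coeff (Qpoly p \<xi> 0 3) j = exp (2 * pi * \<i> * complex_of_real (s j))"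
    and d: "\<not> p dvd d"
  shows "norm (\<Sum>j<p^3. ee (real d * (s j + real j * t))) \<le> real p ^ 2"
proof -
  have p0: "p > 0" using p prime_gt_0_nat by blast
  define w where "w = ee t ^ d"
  define \<zeta> where "\<zeta> = \<xi> ^ d"
  have ord: "\<And>n. \<zeta> ^ n = 1 \<longleftrightarrow> p dvd n" unfolding \<zeta>_def by (rule zeta_ord[OF p xi d])
  have wn: "norm w = 1" unfolding w_def by (simp add: norm_power)
  have wn2: "norm (w ^ (p^2)) = 1" using wn by (simp add: norm_power)
  have f: "ee (real d * (s j + real j * t)) = coeff (Qpoly p \<xi> 0 3) j ^ d * w ^ j" if "j < p^3" for j
  proof -
    have "ee (s j) = coeff (Qpoly p \<xi> 0 3) j" using hs that by (simp add: ee_def cis_conv_exp mult_ac)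
    have "ee (real d * (s j + real j * t)) = (ee (s j) * ee t ^ j) ^ d"
      by (simp add: ee_pow[symmetric] ee_add)
    also have "\<dots> = coeff (Qpoly p \<xi> 0 3) j ^ d * w ^ j"
      using \<open>ee (s j) = _\<close> unfolding w_def by (simp add: power_mult_distrib power_mult[symmetric] mult.commute)
    finally show ?thesis .
  qed
  define A where "A b = (\<Sum>a<p. (\<zeta> ^ b * w) ^ a)" for b
  define C where "C b = (\<Sum>c<p. (\<zeta> ^ b * w ^ (p^2)) ^ c)" for b
  have "(\<Sum>j<p^3. ee (real d * (s j + real j * t))) = (\<Sum>j<p * p^2. ee (real d * (s j + real j * t)))"
    by (simp add: power3_eq_cube power2_eq_square mult.assoc)
  also have "\<dots> = (\<Sum>c<p. \<Sum>i<p^2. ee (real d * (s (c * p^2 + i) + real (c * p^2 + i) * t)))"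
    by (rule sum_split_mult)
  also have "\<dots> = (\<Sum>c<p. \<Sum>b<p. \<Sum>a<p. ee (real d * (s (c * p^2 + (b * p + a)) + real (c * p^2 + (b * p + a)) * t)))"
    by (simp only: power2_eq_square sum_split_mult)
  also have "\<dots> = (\<Sum>c<p. \<Sum>b<p. \<Sum>a<p. w ^ (b * p) * ((\<zeta> ^ b * w) ^ a * (\<zeta> ^ b * w ^ (p^2)) ^ c))"
  proof (intro sum.cong refl)
    fix c b a assume abc: "c \<in> {..<p}" "b \<in> {..<p}" "a \<in> {..<p}"
    have j3: "c * p^2 + (b * p + a) < p^3"
    proof -
      have "b * p + a < p^2"
      proof -
        have "b * p + a < b * p + p" using abc by simp
        also have "\<dots> = Suc b * p" by simp
        also have "\<dots> \<le> p * p" using abc by (intro mult_le_mono1) simp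
        finally show ?thesis by (simp add: power2_eq_square)
      qed
      then have "c * p^2 + (b * p + a) < c * p^2 + p^2" by simp
      also have "\<dots> = Suc c * p^2" by simp
      also have "\<dots> \<le> p * p^2" using abc by (intro mult_le_mono1) simp
      finally show ?thesis by (simp add: power3_eq_cube power2_eq_square)
    qed
    have "ee (real d * (s (c * p^2 + (b * p + a)) + real (c * p^2 + (b * p + a)) * t))
        = (\<xi> ^ (c * b) * \<xi> ^ (b * a)) ^ d * w ^ (c * p^2 + (b * p + a))"
      using f[OF j3] Q3_coeff[OF p0, of a b c \<xi>] abc by simp
    also have "\<dots> = w ^ (b * p) * ((\<zeta> ^ b * w) ^ a * (\<zeta> ^ b * w ^ (p^2)) ^ c)"
      unfolding \<zeta>_def
      by (simp add: power_mult_distrib power_add power_mult[symmetric] mult_ac)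
    finally show "ee (real d * (s (c * p^2 + (b * p + a)) + real (c * p^2 + (b * p + a)) * t))
        = w ^ (b * p) * ((\<zeta> ^ b * w) ^ a * (\<zeta> ^ b * w ^ (p^2)) ^ c)" .
  qed
  also have "\<dots> = (\<Sum>b<p. w ^ (b * p) * (A b * C b))"
  proof -
    have "(\<Sum>c<p. \<Sum>b<p. \<Sum>a<p. w ^ (b * p) * ((\<zeta> ^ b * w) ^ a * (\<zeta> ^ b * w ^ (p^2)) ^ c))
       = (\<Sum>b<p. \<Sum>c<p. \<Sum>a<p. w ^ (b * p) * ((\<zeta> ^ b * w) ^ a * (\<zeta> ^ b * w ^ (p^2)) ^ c))"
      by (rule sum.swap)
    also have "\<dots> = (\<Sum>b<p. w ^ (b * p) * (A b * C b))"
      unfolding A_def C_def by (simp add: sum_distrib_left sum_distrib_right mult_ac)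
    finally show ?thesis .
  qed
  finally have Seq: "(\<Sum>j<p^3. ee (real d * (s j + real j * t))) = (\<Sum>b<p. w ^ (b * p) * (A b * C b))" .
  have "norm (\<Sum>b<p. w ^ (b * p) * (A b * C b)) \<le> (\<Sum>b<p. norm (A b) * norm (C b))"
  proof -
    have "norm (\<Sum>b<p. w ^ (b * p) * (A b * C b)) \<le> (\<Sum>b<p. norm (w ^ (b * p) * (A b * C b)))"
      by (rule norm_sum)
    also have "\<dots> = (\<Sum>b<p. norm (A b) * norm (C b))"
      using wn by (simp add: norm_mult norm_power)
    finally show ?thesis .
  qed
  also have "\<dots> \<le> (\<Sum>b<p. ((norm (A b))^2 + (norm (C b))^2) / 2)"
    by (intro sum_mono amgm)
  also have "\<dots> = ((\<Sum>b<p. (norm (A b))^2) + (\<Sum>b<p. (norm (C b))^2)) / 2"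
    by (simp only: sum_divide_distrib[symmetric] sum.distrib)
  also have "(\<Sum>b<p. (norm (A b))^2) = real p ^ 2" unfolding A_def by (rule parseval[OF p0 ord wn])
  also have "(\<Sum>b<p. (norm (C b))^2) = real p ^ 2" unfolding C_def by (rule parseval[OF p0 ord wn2])
  finally show ?thesis using Seq by simp
qed



lemma harm_bound: "n \<ge> 1 \<Longrightarrow> (\<Sum>d\<in>{1..n}. 1 / real d) \<le> 1 + ln (real n)"
proof (induction n rule: dec_induct)
  case base then show ?case by simp
next
  case (step n)
  have n0: "real n > 0" using step by simp
  have "1 / real (Suc n) \<le> ln (real (Suc n)) - ln (real n)"
  proof -
    have "ln (real n / real (Suc n)) \<le> real n / real (Suc n) - 1"
      by (rule ln_le_minus_one) (use n0 in simp)
    also have "real n / real (Suc n) - 1 = - (1 / real (Suc n))" by (simp add: field_simps)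
    finally show ?thesis using n0 by (simp add: ln_div)
  qed
  moreover have "(\<Sum>d\<in>{1..Suc n}. 1 / real d) = (\<Sum>d\<in>{1..n}. 1 / real d) + 1 / real (Suc n)" by simp
  ultimately show ?case using step.IH by linarith
qed

lemma sum_multiples:
  fixes f :: "nat \<Rightarrow> real"
  assumes "p > 0"
  shows "(\<Sum>d\<in>{1..p*m}. if p dvd d then f d else 0) = (\<Sum>k\<in>{1..m}. f (p * k))"
proof -
  have "(\<Sum>d\<in>{1..p*m}. if p dvd d then f d else 0) = (\<Sum>d\<in>{d\<in>{1..p*m}. p dvd d}. f d)"
    by (rule sum.inter_filter[symmetric]) simp
  also have "{d\<in>{1..p*m}. p dvd d} = (\<lambda>k. p * k) ` {1..m}"
  proof
    show "{d\<in>{1..p*m}. p dvd d} \<subseteq> (\<lambda>k. p * k) ` {1..m}"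
    proof
      fix d assume "d \<in> {d\<in>{1..p*m}. p dvd d}"
      then obtain k where k: "d = p * k" "1 \<le> d" "d \<le> p * m" by auto
      then have "1 \<le> k" "k \<le> m" using assms by (auto simp: Suc_le_eq)
      then show "d \<in> (\<lambda>k. p * k) ` {1..m}" using k by auto
    qed
  next
    show "(\<lambda>k. p * k) ` {1..m} \<subseteq> {d\<in>{1..p*m}. p dvd d}"
      using assms by (auto simp: Suc_le_eq)
  qed
  also have "(\<Sum>d\<in>(\<lambda>k. p * k) ` {1..m}. f d) = (\<Sum>k\<in>{1..m}. f (p * k))"
    using assms by (subst sum.reindex) (auto simp: inj_on_def)
  finally show ?thesis .
qed

lemma G_sum_bound:
  fixes p :: nat
  assumes p2: "p \<ge> 2"
  shows "(\<Sum>d\<in>{1..p^2}. (if p dvd d then real p ^ 3 else real p ^ 2) / real d)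
     \<le> real p ^ 2 * (2 + 3 * ln (real p))"
proof -
  have p0: "p > 0" using p2 by simp
  have "(\<Sum>d\<in>{1..p^2}. (if p dvd d then real p ^ 3 else real p ^ 2) / real d)
     \<le> (\<Sum>d\<in>{1..p^2}. real p ^ 2 * (1 / real d) + (if p dvd d then real p ^ 3 / real d else 0))"
  proof (intro sum_mono)
    fix d assume "d \<in> {1..p^2}"
    have "real p ^ 2 \<le> real p ^ 3" using p0 by (intro power_increasing) auto
    then show "(if p dvd d then real p ^ 3 else real p ^ 2) / real d
        \<le> real p ^ 2 * (1 / real d) + (if p dvd d then real p ^ 3 / real d else 0)"
      by (auto simp: divide_nonneg_nonneg)
  qed
  also have "\<dots> = real p ^ 2 * (\<Sum>d\<in>{1..p^2}. 1 / real d) + (\<Sum>d\<in>{1..p*p}. if p dvd d then real p ^ 3 / real d else 0)"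
    by (simp add: sum.distrib sum_distrib_left power2_eq_square)
  also have "(\<Sum>d\<in>{1..p*p}. if p dvd d then real p ^ 3 / real d else 0) = (\<Sum>k\<in>{1..p}. real p ^ 3 / real (p * k))"
    by (rule sum_multiples[OF p0])
  also have "\<dots> = real p ^ 2 * (\<Sum>k\<in>{1..p}. 1 / real k)"
    unfolding sum_distrib_left by (intro sum.cong refl) (use p0 in \<open>simp add: power3_eq_cube power2_eq_square\<close>)
  also have "(\<Sum>d\<in>{1..p^2}. 1 / real d) \<le> 1 + ln (real (p^2))"
    by (rule harm_bound) (use p0 in simp)
  also have "(\<Sum>k\<in>{1..p}. 1 / real k) \<le> 1 + ln (real p)"
    by (rule harm_bound) (use p0 in simp)
  finally have "(\<Sum>d\<in>{1..p^2}. (if p dvd d then real p ^ 3 else real p ^ 2) / real d)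
     \<le> real p ^ 2 * (1 + ln (real (p^2))) + real p ^ 2 * (1 + ln (real p))"
    by (simp add: mult_left_mono)
  also have "ln (real (p^2)) = 2 * ln (real p)" by (simp add: ln_realpow)
  finally show ?thesis by (simp add: algebra_simps)
qed



lemma count_bound:
  fixes x :: "nat \<Rightarrow> real" and E :: real
  assumes up: "\<And>a b. a \<le> b \<Longrightarrow> real (card {i. i < N \<and> (\<exists>m\<in>\<int>. x i - m \<in> {a..b})}) \<le> real N * (b - a) + E"
    and ab: "0 \<le> a" "a \<le> b" "b \<le> 1"
  shows "\<bar>real (card {i. i < N \<and> frac_part (x i) \<in> {a..b}}) - real N * (b - a)\<bar> \<le> E"
proof -
  define A where "A = {i. i < N \<and> frac_part (x i) \<in> {a..b}}"
  have fr: "0 \<le> frac_part y" "frac_part y < 1" for y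
    unfolding frac_part_def by linarith+
  have A1: "A \<subseteq> {i. i < N \<and> (\<exists>m\<in>\<int>. x i - m \<in> {a..b})}"
  proof
    fix i assume "i \<in> A"
    then have "i < N" "x i - of_int \<lfloor>x i\<rfloor> \<in> {a..b}" unfolding A_def frac_part_def by auto
    then show "i \<in> {i. i < N \<and> (\<exists>m\<in>\<int>. x i - m \<in> {a..b})}" by (auto intro: Ints_of_int)
  qed
  have "real (card A) \<le> real (card {i. i < N \<and> (\<exists>m\<in>\<int>. x i - m \<in> {a..b})})"
    using A1 by (intro of_nat_mono card_mono) auto
  also have "\<dots> \<le> real N * (b - a) + E" using up ab by simp
  finally have U: "real (card A) \<le> real N * (b - a) + E" .
  have A2: "{..<N} - A \<subseteq> {i. i < N \<and> (\<exists>m\<in>\<int>. x i - m \<in> {b..a+1})}"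
  proof
    fix i assume i: "i \<in> {..<N} - A"
    then have iN: "i < N" and nA: "frac_part (x i) \<notin> {a..b}" unfolding A_def by auto
    show "i \<in> {i. i < N \<and> (\<exists>m\<in>\<int>. x i - m \<in> {b..a+1})}"
    proof (cases "frac_part (x i) < a")
      case True
      have "x i - (of_int \<lfloor>x i\<rfloor> - 1) = frac_part (x i) + 1" unfolding frac_part_def by simp
      moreover have "of_int \<lfloor>x i\<rfloor> - 1 \<in> (\<int> :: real set)" by (metis Ints_diff Ints_of_int Ints_1)
      ultimately have "x i - (of_int \<lfloor>x i\<rfloor> - 1) \<in> {b..a+1}" "of_int \<lfloor>x i\<rfloor> - 1 \<in> (\<int> :: real set)"
        using True fr[of "x i"] ab by auto
      then show ?thesis using iN by blast
    next
      case False
      then have "frac_part (x i) > b" using nA by auto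
      moreover have "x i - of_int \<lfloor>x i\<rfloor> = frac_part (x i)" unfolding frac_part_def by simp
      ultimately have "x i - of_int \<lfloor>x i\<rfloor> \<in> {b..a+1}" using fr[of "x i"] ab by auto
      moreover have "of_int \<lfloor>x i\<rfloor> \<in> (\<int> :: real set)" by (rule Ints_of_int)
      ultimately show ?thesis using iN by blast
    qed
  qed
  have "real (card ({..<N} - A)) \<le> real (card {i. i < N \<and> (\<exists>m\<in>\<int>. x i - m \<in> {b..a+1})})"
    using A2 by (intro of_nat_mono card_mono) auto
  also have "\<dots> \<le> real N * (a + 1 - b) + E" using up[of b "a+1"] ab by simp
  finally have L1: "real (card ({..<N} - A)) \<le> real N * (a + 1 - b) + E" .
  have AN: "A \<subseteq> {..<N}" unfolding A_def by auto
  have "card ({..<N} - A) = N - card A" using AN by (simp add: card_Diff_subset finite_subset)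
  moreover have "card A \<le> N" using AN by (metis card_lessThan card_mono finite_lessThan)
  ultimately have "real (card ({..<N} - A)) = real N - real (card A)" by simp
  with L1 have "real (card A) \<ge> real N * (b - a) - E" by (simp add: algebra_simps)
  with U show ?thesis unfolding A_def by (simp add: abs_le_iff)
qed

theorem corollary4p4:
  shows "\<exists>C>0. \<forall>(p::nat) (\<xi>::complex) (s::nat \<Rightarrow> real) (t::real).
    prime p \<longrightarrow> primitive_root_of_unity p \<xi> \<longrightarrow>
    (\<forall>j < p ^ 3. 0 \<le> s j \<and> s j < 1 \<and>
        coeff (Qpoly p \<xi> 0 3) j = exp (2 * pi * \<i> * complex_of_real (s j))) \<longrightarrow>
    bias (p ^ 3) (\<lambda>j. s j + real j * t) \<le> C * real (p ^ 3) powr (2/3) * ln (real (p ^ 3))"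
proof (intro exI[of _ "10::real"] conjI allI impI)
  show "(0::real) < 10" by simp
  fix p :: nat and \<xi> :: complex and s :: "nat \<Rightarrow> real" and t :: real
  assume p: "prime p" and xi: "primitive_root_of_unity p \<xi>"
    and hs0: "\<forall>j < p ^ 3. 0 \<le> s j \<and> s j < 1 \<and>
        coeff (Qpoly p \<xi> 0 3) j = exp (2 * pi * \<i> * complex_of_real (s j))"
  have hs: "\<forall>j < p ^ 3. coeff (Qpoly p \<xi> 0 3) j = exp (2 * pi * \<i> * complex_of_real (s j))"
    using hs0 by blast
  have p2: "p \<ge> 2" using p prime_ge_2_nat by blast
  have rp: "real p \<ge> 2" using p2 by simp
  define N where "N = p ^ 3"
  define x where "x j = s j + real j * t" for j
  define H where "H = p ^ 2"
  define L where "L = 2 * p ^ 2 + 1"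
  define \<delta> where "\<delta> = 1 / real p"
  define G where "G d = (if p dvd d then real p ^ 3 else real p ^ 2)" for d :: nat
  have \<delta>0: "\<delta> > 0" unfolding \<delta>_def using rp by simp
  have L\<delta>: "real L * \<delta> \<ge> 1"
  proof -
    have "p \<le> p * p" using p2 by simp
    then have "p \<le> L" unfolding L_def power2_eq_square by linarith
    then have "real p \<le> real L" by simp
    then show ?thesis unfolding \<delta>_def using rp by (simp add: field_simps)
  qed
  have HL: "2 * H < L" unfolding H_def L_def by simp
  have SB: "norm (\<Sum>i<N. ee (real d * x i)) \<le> G d" if "1 \<le> d" "d \<le> H" for d
  proof (cases "p dvd d")
    case True
    have "norm (\<Sum>i<N. ee (real d * x i)) \<le> real N" by (rule trivial_bound)
    then show ?thesis unfolding G_def N_def using True by simp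
  next
    case False
    have "norm (\<Sum>i<N. ee (real d * x i)) \<le> real p ^ 2"
      unfolding N_def x_def by (rule S_bound[OF p xi hs False])
    then show ?thesis unfolding G_def using False by simp
  qed
  define E where "E = 2 * real N * \<delta> + real N / real L + 4 * real N / (real (Suc H) * \<delta>)
        + 2 * (\<Sum>d\<in>{1..H}. G d / real d)"
  have up: "real (card {i. i < N \<and> (\<exists>m\<in>\<int>. x i - m \<in> {a..b})}) \<le> real N * (b - a) + E"
    if "a \<le> b" for a b
    using et_main[OF \<delta>0 L\<delta> HL that SB] unfolding E_def by simp
  have Eb: "E \<le> 30 * real p ^ 2 * ln (real p)"
  proof -
    have e1: "2 * real N * \<delta> = 2 * real p ^ 2" unfolding N_def \<delta>_def using rp
      by (simp add: power3_eq_cube power2_eq_square)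
    have e2: "real N / real L \<le> real p ^ 2"
    proof -
      have Lge: "real p ^ 2 \<le> real L" unfolding L_def by simp
      have pp: "real p ^ 2 > 0" using rp by simp
      have "real N / real L \<le> real N / real p ^ 2"
        using Lge pp HL by (intro divide_left_mono mult_pos_pos) auto
      also have "\<dots> = real p" unfolding N_def using rp by (simp add: power3_eq_cube power2_eq_square)
      also have "\<dots> \<le> real p ^ 2" using rp by (simp add: power2_eq_square)
      finally show ?thesis .
    qed
    have e3: "4 * real N / (real (Suc H) * \<delta>) \<le> 4 * real p ^ 2"
    proof -
      have "4 * real N / (real (Suc H) * \<delta>) = 4 * real p ^ 4 / (real p ^ 2 + 1)"
        unfolding N_def H_def \<delta>_def using rp by (simp add: field_simps eval_nat_numeral)
      also have "\<dots> \<le> 4 * real p ^ 4 / real p ^ 2"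
        using rp by (intro divide_left_mono mult_pos_pos add_pos_pos) auto
      also have "\<dots> = 4 * real p ^ 2" using rp by (simp add: field_simps eval_nat_numeral)
      finally show ?thesis .
    qed
    have e4: "(\<Sum>d\<in>{1..H}. G d / real d) \<le> real p ^ 2 * (2 + 3 * ln (real p))"
      unfolding H_def G_def by (rule G_sum_bound[OF p2])
    have ln2: "ln (real p) \<ge> 2/3"
    proof -
      have "ln (2::real) \<le> ln (real p)" using rp by simp
      then show ?thesis using ln2_ge_two_thirds by linarith
    qed
    have "E \<le> 2 * real p ^ 2 + real p ^ 2 + 4 * real p ^ 2 + 2 * (real p ^ 2 * (2 + 3 * ln (real p)))"
      unfolding E_def using e1 e2 e3 e4 by linarith
    also have "\<dots> = real p ^ 2 * (11 + 6 * ln (real p))" by (simp add: algebra_simps)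
    also have "\<dots> \<le> real p ^ 2 * (30 * ln (real p))"
      using ln2 by (intro mult_left_mono) auto
    finally show ?thesis by simp
  qed
  have rhs: "10 * real (p ^ 3) powr (2/3) * ln (real (p ^ 3)) = 30 * real p ^ 2 * ln (real p)"
  proof -
    have "real (p ^ 3) powr (2/3) = (real p powr 3) powr (2/3)"
      using rp by (simp add: powr_realpow)
    also have "\<dots> = real p powr 2" by (subst powr_powr) simp
    also have "\<dots> = real p ^ 2" using rp by (simp add: powr_realpow)
    finally have "real (p ^ 3) powr (2/3) = real p ^ 2" .
    moreover have "ln (real (p ^ 3)) = 3 * ln (real p)" by (simp add: ln_realpow)
    ultimately show ?thesis by simp
  qed
  have "bias N x \<le> E"
    unfolding bias_def
  proof (rule cSUP_least)
    show "{(a, b). 0 \<le> a \<and> a \<le> b \<and> b \<le> (1::real)} \<noteq> {}" by (auto intro!: exI[of _ 0])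
  next
    fix ab :: "real \<times> real" assume "ab \<in> {(a, b). 0 \<le> a \<and> a \<le> b \<and> b \<le> 1}"
    then obtain a b where ab: "ab = (a, b)" "0 \<le> a" "a \<le> b" "b \<le> 1" by auto
    have "\<bar>real (card {i. i < N \<and> frac_part (x i) \<in> {a..b}}) - real N * (b - a)\<bar> \<le> E"
      by (rule count_bound[OF up ab(2-4)])
    then show "\<bar>real (card {i. i < N \<and> frac_part (x i) \<in> {fst ab..snd ab}}) - real N * (snd ab - fst ab)\<bar> \<le> E"
      using ab by simp
  qed
  then have "bias (p ^ 3) (\<lambda>j. s j + real j * t) \<le> 30 * real p ^ 2 * ln (real p)"
    using Eb unfolding N_def x_def by simp
  then show "bias (p ^ 3) (\<lambda>j. s j + real j * t) \<le> 10 * real (p ^ 3) powr (2/3) * ln (real (p ^ 3))"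
    unfolding rhs .
qed


end
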